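(* There exist topological dynamical systems $(X,T)$, $(Y,S)$ and a function $f\in C(X\times Y)$ such that, for the factor map $\pi:(X\times Y,T\times S)\to(Y,S)$, $\pi(x,y)=y$, we have $\alpha(f)=\beta(f)=\gamma(f)<\delta(f)$, and moreover $\alpha(f)<\beta^*(f)=\gamma^*(f)=\delta^*(f)=\delta(f)$.
   Context: A topological dynamical system is a pair $(X,T)$ with $X$ compact metrizable and $T$ a homeomorphism; $\mathcal{M}_T(X)$ is the set of $T$-invariant Borel probability measures. Write $Z=X\times Y$, $U=T\times S$. For $f\in C(Z)$: $\psi_f(\nu)=\min\{\int f\,d\lambda:\lambda\in\mathcal{M}_U(Z),\pi_*\lambda=\nu\}$ for $\nu\in\mathcal{M}_S(Y)$; $\alpha(f)=\sup_{\nu\in\mathcal{M}_S(Y)}\psi_f(\nu)$; with $\mathbb{A}_Jf=\frac{1}{|J|}\sum_{j\in J}f\circ U^j$ and $\mathbb{A}_k=\mathbb{A}_{[0,k-1]}$, let $R_f=\{z:\lim_k\mathbb{A}_kf(z)\text{ exists}\}$, $R_f^*=\{z:\lim_k\mathbb{A}_{[-k,k]}f(z)\text{ exists}\}$, and $\beta(f)=\sup_{y\in\pi(R_f)}\inf_{z\in R_f\cap\pi^{-1}\{y\}}\lim_k\mathbb{A}_kf(z)$, $\gamma(f)=\sup_{y\in Y}\inf_{z\in\pi^{-1}\{y\}}\limsup_k\mathbb{A}_kf(z)$, $\delta(f)=\limsup_k\max_{y\in Y}\min_{z\in\pi^{-1}\{y\}}\mathbb{A}_kf(z)$, $\beta^*(f)=\sup_{y\in\pi(R^*_f)}\inf_{z\in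 R^*_f\cap\pi^{-1}\{y\}}\lim_k\mathbb{A}_{[-k,k]}f(z)$, $\gamma^*(f)=\sup_{y\in Y}\inf_{z\in\pi^{-1}\{y\}}\limsup_k\mathbb{A}_{[-k,k]}f(z)$, $\delta^*(f)=\limsup_k\max_{y\in Y}\min_{z\in\pi^{-1}\{y\}}\mathbb{A}_{[-k,k]}f(z)$. *)

theory Defs
  imports "HOL-Analysis.Analysis" "HOL-Probability.Probability"
begin

text \<open>Ambient type: the countable product of the reals (metrizable, contains a copy of the
Hilbert cube, hence of every compact metrizable space).\<close>
type_synonym pt = "nat \<Rightarrow> real"

definition tds :: "'a::metric_space set \<Rightarrow> ('a \<Rightarrow> 'a) \<Rightarrow> bool" where
  "tds X T \<longleftrightarrow> compact X \<and> (\<exists>T'. homeomorphism X X T T')"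

definition inv_meas :: "'a::topological_space set \<Rightarrow> ('a \<Rightarrow> 'a) \<Rightarrow> 'a measure set" where
  "inv_meas X T = {\<mu>. sets \<mu> = sets (restrict_space borel X) \<and> prob_space \<mu>
       \<and> T \<in> measurable \<mu> \<mu> \<and> distr \<mu> \<mu> T = \<mu>}"

definition prodmap :: "('a \<Rightarrow> 'a) \<Rightarrow> ('b \<Rightarrow> 'b) \<Rightarrow> 'a \<times> 'b \<Rightarrow> 'a \<times> 'b" where
  "prodmap T S = (\<lambda>(x, y). (T x, S y))"

definition iter_int :: "'a set \<Rightarrow> ('a \<Rightarrow> 'a) \<Rightarrow> int \<Rightarrow> 'a \<Rightarrow> 'a" where
  "iter_int Z U j = (if 0 \<le> j then U ^^ nat j else inv_into Z U ^^ nat (- j))"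

text \<open>psi_f(nu) (the minimum is attained; written as an infimum).\<close>
definition psi :: "'a::topological_space set \<Rightarrow> ('a \<Rightarrow> 'a) \<Rightarrow> 'b::topological_space set
    \<Rightarrow> ('b \<Rightarrow> 'b) \<Rightarrow> ('a \<times> 'b \<Rightarrow> real) \<Rightarrow> 'b measure \<Rightarrow> real" where
  "psi X T Y S f \<nu> = Inf {integral\<^sup>L lam f | lam. lam \<in> inv_meas (X \<times> Y) (prodmap T S)
       \<and> distr lam (restrict_space borel Y) snd = \<nu>}"

definition alpha where
  "alpha X T Y S f = Sup (psi X T Y S f ` inv_meas Y S)"

definition avg :: "('a \<Rightarrow> 'a) \<Rightarrow> ('b \<Rightarrow> 'b) \<Rightarrow> ('a \<times> 'b \<Rightarrow> real) \<Rightarrow> nat \<Rightarrow> 'a \<times> 'b \<Rightarrow> real" where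
  "avg T S f k z = (\<Sum>j<k. f ((prodmap T S ^^ j) z)) / real k"

definition savg :: "'a set \<Rightarrow> ('a \<Rightarrow> 'a) \<Rightarrow> 'b set \<Rightarrow> ('b \<Rightarrow> 'b) \<Rightarrow> ('a \<times> 'b \<Rightarrow> real)
    \<Rightarrow> nat \<Rightarrow> 'a \<times> 'b \<Rightarrow> real" where
  "savg X T Y S f k z = (\<Sum>j\<in>{- int k..int k}. f (iter_int (X \<times> Y) (prodmap T S) j z)) / real (2 * k + 1)"

definition limsup_r :: "(nat \<Rightarrow> real) \<Rightarrow> real" where
  "limsup_r u = real_of_ereal (limsup (\<lambda>k. ereal (u k)))"

definition Rset where
  "Rset X T Y S f = {z \<in> X \<times> Y. convergent (\<lambda>k. avg T S f k z)}"

definition Rset_s where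
  "Rset_s X T Y S f = {z \<in> X \<times> Y. convergent (\<lambda>k. savg X T Y S f k z)}"

definition beta where
  "beta X T Y S f = Sup ((\<lambda>y. Inf ((\<lambda>z. lim (\<lambda>k. avg T S f k z)) `
       {z \<in> Rset X T Y S f. snd z = y})) ` (snd ` Rset X T Y S f))"

definition gamma where
  "gamma X T Y S f = Sup ((\<lambda>y. Inf ((\<lambda>z. limsup_r (\<lambda>k. avg T S f k z)) `
       {z \<in> X \<times> Y. snd z = y})) ` Y)"

text \<open>max/min are attained (compactness, continuity); written as Sup/Inf.\<close>
definition delta where
  "delta X T Y S f = limsup_r (\<lambda>k. Sup ((\<lambda>y. Inf ((\<lambda>z. avg T S f k z) `
       {z \<in> X \<times> Y. snd z = y})) ` Y))"

definition beta_s where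
  "beta_s X T Y S f = Sup ((\<lambda>y. Inf ((\<lambda>z. lim (\<lambda>k. savg X T Y S f k z)) `
       {z \<in> Rset_s X T Y S f. snd z = y})) ` (snd ` Rset_s X T Y S f))"

definition gamma_s where
  "gamma_s X T Y S f = Sup ((\<lambda>y. Inf ((\<lambda>z. limsup_r (\<lambda>k. savg X T Y S f k z)) `
       {z \<in> X \<times> Y. snd z = y})) ` Y)"

definition delta_s where
  "delta_s X T Y S f = limsup_r (\<lambda>k. Sup ((\<lambda>y. Inf ((\<lambda>z. savg X T Y S f k z) `
       {z \<in> X \<times> Y. snd z = y})) ` Y))"

end

theory Submission
  imports Defs "HOL-Real_Asymp.Real_Asymp"
begin


definition tt :: "int \<Rightarrow> real" where "tt n = (3 powr real_of_int n - 1) / (3 powr real_of_int n + 1)"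
definition sg :: "real \<Rightarrow> real" where "sg t = (2*t+1)/(t+2)"
definition sgi :: "real \<Rightarrow> real" where "sgi t = (2*t-1)/(2-t)"
definition hr :: "real \<Rightarrow> real" where "hr t = min 1 (max 0 (-2*t))"
definition Yr :: "real set" where "Yr = range tt \<union> {-1, 1}"

lemma q_succ: "(q::real) > 0 \<Longrightarrow> (2*((q-1)/(q+1))+1)/((q-1)/(q+1)+2) = (3*q-1)/(3*q+1)"
proof -
  assume q: "q > 0"
  then have a: "q + 1 \<noteq> 0" "3*q+1 \<noteq> 0" by auto
  have "(q-1)/(q+1)+2 = (3*q+1)/(q+1)" using a by (simp add: field_simps)
  moreover have "2*((q-1)/(q+1))+1 = (3*q-1)/(q+1)" using a by (simp add: field_simps)
  ultimately show ?thesis using a by simp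
qed

lemma q_pred: "(q::real) > 0 \<Longrightarrow> (2*((3*q-1)/(3*q+1))-1)/(2-(3*q-1)/(3*q+1)) = (q-1)/(q+1)"
proof -
  assume q: "q > 0"
  then have a: "q + 1 \<noteq> 0" "3*q+1 \<noteq> 0" "3*q+3 \<noteq> 0" by auto
  have "2-(3*q-1)/(3*q+1) = (3*q+3)/(3*q+1)" using a by (simp add: field_simps)
  moreover have "2*((3*q-1)/(3*q+1))-1 = (3*q-3)/(3*q+1)" using a by (simp add: field_simps)
  moreover have "((3*q-3)/(3*q+1)) / ((3*q+3)/(3*q+1)) = (3*q-3)/(3*q+3)" using a by simp
  moreover have "(3*q-3)/(3*q+3) = (q-1)/(q+1)" using a by (simp add: field_simps)
  ultimately show ?thesis by simp
qed

lemma tt_succ: "sg (tt n) = tt (n+1)"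
proof -
  have q: "3 powr real_of_int (n+1) = 3 * 3 powr real_of_int n" by (simp add: powr_add)
  show ?thesis unfolding sg_def tt_def q using q_succ[of "3 powr real_of_int n"] by simp
qed

lemma tt_pred: "sgi (tt n) = tt (n-1)"
proof -
  have q: "3 powr real_of_int n = 3 * 3 powr real_of_int (n-1)"
    using powr_add[of 3 "real_of_int (n-1)" 1] by simp
  show ?thesis unfolding sgi_def tt_def q using q_pred[of "3 powr real_of_int (n-1)"] by simp
qed

lemma q_bounds: "(q::real) > 0 \<Longrightarrow> -1 < (q-1)/(q+1) \<and> (q-1)/(q+1) < 1"
  by (simp add: field_simps)

lemma tt_bounds: "-1 < tt n" "tt n < 1"
  using q_bounds[of "3 powr real_of_int n"] unfolding tt_def by auto

lemma q_small: "(q::real) > 0 \<Longrightarrow> q \<le> 1/3 \<Longrightarrow> (q-1)/(q+1) \<le> -1/2"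
  by (simp add: field_simps)

lemma hr_tt: "hr (tt n) = (if n < 0 then 1 else 0)"
proof (cases "n < 0")
  case True
  then have "real_of_int n \<le> -1" by simp
  then have "3 powr real_of_int n \<le> 3 powr (-1)" by (intro powr_mono) auto
  then have q: "3 powr real_of_int n \<le> 1/3" by (simp add: powr_minus)
  have p: "3 powr real_of_int n > 0" by simp
  have "tt n \<le> -1/2" unfolding tt_def using q_small[OF p q] .
  then show ?thesis using True unfolding hr_def by simp
next
  case False
  then have "3 powr real_of_int n \<ge> 3 powr 0" by (intro powr_mono) auto
  then have q: "3 powr real_of_int n \<ge> 1" by simp
  have "tt n \<ge> 0" unfolding tt_def using q by simp
  then show ?thesis using False unfolding hr_def by simp
qed

lemma tt_inj: "tt n = tt m \<Longrightarrow> n = m"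
proof -
  assume h: "tt n = tt m"
  have p: "3 powr real_of_int n > 0" "3 powr real_of_int m > 0" by simp_all
  have a: "3 powr real_of_int n + 1 \<noteq> 0" "3 powr real_of_int m + 1 \<noteq> 0" using p by linarith+
  from h have "3 powr real_of_int n = 3 powr real_of_int m"
    unfolding tt_def using a by (simp add: field_simps)
  then show "n = m" using powr_inj[of 3 "real_of_int n" "real_of_int m"] by simp
qed

lemma sg_fix: "sg 1 = 1" "sg (-1) = -1" "sgi 1 = 1" "sgi (-1) = -1"
  by (simp_all add: sg_def sgi_def)

lemma Yr_bounds: "t \<in> Yr \<Longrightarrow> -1 \<le> t \<and> t \<le> 1"
  unfolding Yr_def using tt_bounds by (auto simp: less_imp_le)

lemma sg_sgi: "-1 \<le> t \<Longrightarrow> t \<le> 1 \<Longrightarrow> sg (sgi t) = t"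
  "-1 \<le> t \<Longrightarrow> t \<le> 1 \<Longrightarrow> sgi (sg t) = t"
  by (simp_all add: sg_def sgi_def field_simps)

lemma sg_Yr: "sg ` Yr = Yr"
proof -
  have "sg ` range tt = range tt"
  proof
    show "sg ` range tt \<subseteq> range tt" using tt_succ by auto
    show "range tt \<subseteq> sg ` range tt"
    proof
      fix t assume "t \<in> range tt" then obtain n where "t = tt n" by auto
      then have "t = sg (tt (n-1))" using tt_succ[of "n-1"] by simp
      then show "t \<in> sg ` range tt" by auto
    qed
  qed
  then show ?thesis unfolding Yr_def using sg_fix by auto
qed

lemma sgi_Yr: "sgi ` Yr \<subseteq> Yr"
  unfolding Yr_def using sg_fix tt_pred by auto

lemma compact_Yr: "compact Yr"
proof -
  have l1: "(\<lambda>n::nat. tt (int n)) \<longlonglongrightarrow> 1" unfolding tt_def by simp real_asymp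
  have l2: "(\<lambda>n::nat. tt (- int n)) \<longlonglongrightarrow> -1" unfolding tt_def by simp real_asymp
  have "range tt \<subseteq> range (\<lambda>n::nat. tt (int n)) \<union> range (\<lambda>n::nat. tt (- int n))"
  proof
    fix t assume "t \<in> range tt"
    then obtain n where t: "t = tt n" by auto
    show "t \<in> range (\<lambda>n::nat. tt (int n)) \<union> range (\<lambda>n::nat. tt (- int n))"
    proof (cases "n \<ge> 0")
      case True then have "n = int (nat n)" by simp
      then show ?thesis unfolding t by (metis UnI1 rangeI)
    next
      case False then have "n = - int (nat (-n))" by simp
      then show ?thesis unfolding t by (metis UnI2 rangeI)
    qed
  qed
  then have "range tt = range (\<lambda>n::nat. tt (int n)) \<union> range (\<lambda>n::nat. tt (- int n))" by auto
  then have eq: "Yr = insert 1 (range (\<lambda>n::nat. tt (int n))) \<union> insert (-1) (range (\<lambda>n::nat. tt (- int n)))"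
    unfolding Yr_def by auto
  show ?thesis unfolding eq
    by (rule compact_Un[OF compact_sequence_with_limit[OF l1] compact_sequence_with_limit[OF l2]])
qed


definition e :: "real \<Rightarrow> pt" where "e t = (\<lambda>i. t)"
definition XX :: "pt set" where "XX = {e 0, e 1}"
definition YY :: "pt set" where "YY = e ` Yr"
definition SS :: "pt \<Rightarrow> pt" where "SS y = e (sg (y 0))"
definition SSi :: "pt \<Rightarrow> pt" where "SSi y = e (sgi (y 0))"
definition ff :: "pt \<times> pt \<Rightarrow> real" where
  "ff z = (1 - fst z 0) * hr (snd z 0) + fst z 0 * (1 - hr (snd z 0))"

lemma e_app: "e t i = t" by (simp add: e_def)
lemma e_inj[simp]: "e s = e t \<longleftrightarrow> s = t" by (metis e_app)
lemma SS_e[simp]: "SS (e t) = e (sg t)" by (simp add: SS_def e_app)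
lemma SSi_e[simp]: "SSi (e t) = e (sgi t)" by (simp add: SSi_def e_app)

lemma cont_e[continuous_intros]: "continuous_on A f \<Longrightarrow> continuous_on A (\<lambda>x. e (f x))"
  unfolding e_def by (intro continuous_intros)

lemma cont_coord[continuous_intros]: "continuous_on A (\<lambda>x::pt. x i)"
  by (rule continuous_on_subset[OF continuous_on_product_coordinates]) auto

lemma cont_fst_coord[continuous_intros]: "continuous_on A (\<lambda>x::pt\<times>pt. fst x i)"
  by (rule continuous_on_compose2[OF continuous_on_product_coordinates continuous_on_fst[OF continuous_on_id]]) auto

lemma cont_snd_coord[continuous_intros]: "continuous_on A (\<lambda>x::pt\<times>pt. snd x i)"
  by (rule continuous_on_compose2[OF continuous_on_product_coordinates continuous_on_snd[OF continuous_on_id]]) auto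

lemma tds_X: "tds XX (\<lambda>x. x)"
  unfolding tds_def XX_def
  by (auto intro!: exI[of _ "\<lambda>x. x"] simp: homeomorphism_def)

lemma YY_cases: "y \<in> YY \<Longrightarrow> (\<exists>n. y = e (tt n)) \<or> y = e 1 \<or> y = e (-1)"
  unfolding YY_def Yr_def by auto

lemma YY_0: "y \<in> YY \<Longrightarrow> -1 \<le> y 0 \<and> y 0 \<le> 1"
  unfolding YY_def using Yr_bounds by (auto simp: e_app)

lemma tds_Y: "tds YY SS"
  unfolding tds_def
proof (intro conjI exI)
  show "compact YY" unfolding YY_def
    by (rule compact_continuous_image[OF _ compact_Yr]) (intro continuous_intros)
  have c1: "continuous_on YY SS"
    unfolding SS_def sg_def
    by (intro continuous_intros) (use YY_0 in fastforce)
  have c2: "continuous_on YY SSi"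
    unfolding SSi_def sgi_def
    by (intro continuous_intros) (use YY_0 in fastforce)
  have i1: "SS ` YY = YY" unfolding YY_def using sg_Yr by (simp add: image_image) (metis image_image)
  have i2: "SSi ` YY = YY"
  proof
    show "SSi ` YY \<subseteq> YY" unfolding YY_def using sgi_Yr by auto
    show "YY \<subseteq> SSi ` YY"
    proof
      fix y assume "y \<in> YY"
      then obtain t where t: "t \<in> Yr" "y = e t" unfolding YY_def by auto
      then have "sg t \<in> Yr" using sg_Yr by auto
      then have "SS y \<in> YY" unfolding YY_def using t by auto
      moreover have "SSi (SS y) = y" using t Yr_bounds[OF t(1)] sg_sgi by simp
      ultimately show "y \<in> SSi ` YY" by (metis image_eqI)
    qed
  qed
  show "homeomorphism YY YY SS SSi"
    unfolding homeomorphism_def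
  proof (intro conjI ballI c1 c2 i1 i2)
    fix y assume "y \<in> YY"
    then obtain t where t: "t \<in> Yr" "y = e t" unfolding YY_def by auto
    show "SSi (SS y) = y" using t Yr_bounds[OF t(1)] sg_sgi by simp
    show "SS (SSi y) = y" using t Yr_bounds[OF t(1)] sg_sgi by simp
  qed
qed

lemma cont_hr[continuous_intros]: "continuous_on A f \<Longrightarrow> continuous_on A (\<lambda>x. hr (f x))"
  unfolding hr_def by (intro continuous_intros)

lemma cont_ff: "continuous_on (XX \<times> YY) ff"
  unfolding ff_def by (intro continuous_intros)


abbreviation UU where "UU \<equiv> prodmap (\<lambda>x::pt. x) SS"

lemma UU_pair[simp]: "UU (x, y) = (x, SS y)" by (simp add: prodmap_def)

lemma UUpow: "(UU ^^ m) (x, y) = (x, (SS ^^ m) y)"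
  by (induction m) auto

lemma SSpow_tt: "(SS ^^ m) (e (tt n)) = e (tt (n + int m))"
  by (induction m) (auto simp: tt_succ algebra_simps)

lemma SSpow_fix: "(SS ^^ m) (e 1) = e 1" "(SS ^^ m) (e (-1)) = e (-1)"
  by (induction m) (auto simp: sg_fix)

lemma in_YY[simp]: "e (tt n) \<in> YY" "e 1 \<in> YY" "e (-1) \<in> YY"
  unfolding YY_def Yr_def by auto

lemma in_XX[simp]: "e 0 \<in> XX" "e 1 \<in> XX"
  unfolding XX_def by auto

lemma SS_YY: "SS ` YY = YY"
  using tds_Y unfolding tds_def homeomorphism_def
  by (metis (no_types, lifting) homeomorphism_def tds_Y tds_def homeomorphism_of_subsets) 

lemma inj_SS: "inj_on SS YY"
proof
  fix x y assume "x \<in> YY" "y \<in> YY" "SS x = SS y"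
  then obtain s t where st: "s \<in> Yr" "t \<in> Yr" "x = e s" "y = e t" unfolding YY_def by auto
  then have "sg s = sg t" using \<open>SS x = SS y\<close> by simp
  then have "sgi (sg s) = sgi (sg t)" by simp
  then show "x = y" using st Yr_bounds[OF st(1)] Yr_bounds[OF st(2)] sg_sgi by simp
qed

lemma inv_SS_tt: "inv_into YY SS (e (tt n)) = e (tt (n - 1))"
  by (rule inv_into_f_eq[OF inj_SS]) (auto simp: tt_succ)

lemma inv_SS_fix: "inv_into YY SS (e 1) = e 1" "inv_into YY SS (e (-1)) = e (-1)"
  by (rule inv_into_f_eq[OF inj_SS], auto simp: sg_fix)+

lemma inj_UU: "inj_on UU (XX \<times> YY)"
  using inj_SS unfolding inj_on_def by auto

lemma invYY: "y \<in> YY \<Longrightarrow> inv_into YY SS y \<in> YY"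
  using SS_YY by (metis inv_into_into)

lemma invpow_YY: "y \<in> YY \<Longrightarrow> (inv_into YY SS ^^ m) y \<in> YY"
  by (induction m) (auto simp: invYY)

lemma invUU: "x \<in> XX \<Longrightarrow> y \<in> YY \<Longrightarrow> inv_into (XX \<times> YY) UU (x, y) = (x, inv_into YY SS y)"
proof (rule inv_into_f_eq[OF inj_UU])
  assume "x \<in> XX" "y \<in> YY"
  then show "(x, inv_into YY SS y) \<in> XX \<times> YY" using invYY by auto
  show "UU (x, inv_into YY SS y) = (x, y)" using \<open>y \<in> YY\<close> SS_YY by (simp add: f_inv_into_f)
qed

lemma invUUpow: "x \<in> XX \<Longrightarrow> y \<in> YY \<Longrightarrow>
   (inv_into (XX \<times> YY) UU ^^ m) (x, y) = (x, (inv_into YY SS ^^ m) y)"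
  by (induction m) (auto simp: invUU invpow_YY)

lemma iterUU: "x \<in> XX \<Longrightarrow> y \<in> YY \<Longrightarrow>
   iter_int (XX \<times> YY) UU j (x, y) = (x, iter_int YY SS j y)"
  unfolding iter_int_def by (auto simp: UUpow invUUpow)

lemma invpow_tt: "(inv_into YY SS ^^ m) (e (tt n)) = e (tt (n - int m))"
  by (induction m) (auto simp: inv_SS_tt algebra_simps)

lemma invpow_fix: "(inv_into YY SS ^^ m) (e 1) = e 1" "(inv_into YY SS ^^ m) (e (-1)) = e (-1)"
  by (induction m) (auto simp: inv_SS_fix)

lemma iter_tt: "iter_int YY SS j (e (tt n)) = e (tt (n + j))"
  unfolding iter_int_def by (auto simp: SSpow_tt invpow_tt)

lemma iter_fix: "iter_int YY SS j (e 1) = e 1" "iter_int YY SS j (e (-1)) = e (-1)"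
  unfolding iter_int_def by (auto simp: SSpow_fix invpow_fix)


lemma limsup_r_tendsto: "u \<longlonglongrightarrow> c \<Longrightarrow> limsup_r u = c"
  unfolding limsup_r_def
  by (subst lim_imp_Limsup[of sequentially "\<lambda>k. ereal (u k)" "ereal c"]) (auto)

lemma limsup_r_nonneg: "(\<And>k. 0 \<le> u k) \<Longrightarrow> (\<And>k. u k \<le> 1) \<Longrightarrow> 0 \<le> limsup_r u"
proof -
  assume a: "\<And>k. 0 \<le> u k" "\<And>k. u k \<le> 1"
  have "limsup (\<lambda>k. ereal (u k)) \<le> 1" by (rule Limsup_bounded) (use a in auto)
  moreover have "0 \<le> limsup (\<lambda>k. ereal (u k))" by (rule le_Limsup) (use a in auto)
  ultimately show ?thesis unfolding limsup_r_def by (cases "limsup (\<lambda>k. ereal (u k))") auto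
qed

lemma limsup_r_squeeze:
  assumes up: "\<And>k. u k \<le> c" and r: "strict_mono r" and lo: "\<And>k. l k \<le> u (r k)"
    and lim: "l \<longlonglongrightarrow> c"
  shows "limsup_r u = c"
proof -
  have 1: "limsup (\<lambda>k. ereal (u k)) \<le> ereal c" by (rule Limsup_bounded) (use up in auto)
  have "limsup (\<lambda>k. ereal (l k)) = ereal c"
    by (rule lim_imp_Limsup) (use lim in auto)
  moreover have "limsup (\<lambda>k. ereal (l k)) \<le> limsup ((\<lambda>k. ereal (u k)) \<circ> r)"
    by (rule Limsup_mono) (use lo in auto)
  moreover have "limsup ((\<lambda>k. ereal (u k)) \<circ> r) \<le> limsup (\<lambda>k. ereal (u k))"
    by (rule limsup_subseq_mono[OF r])
  ultimately have "limsup (\<lambda>k. ereal (u k)) = ereal c" using 1 by auto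
  then show ?thesis unfolding limsup_r_def by simp
qed

lemma hr_bounds: "0 \<le> hr t" "hr t \<le> 1" unfolding hr_def by auto

lemma ff_e0[simp]: "ff (e 0, y) = hr (y 0)" by (simp add: ff_def e_app)
lemma ff_e1[simp]: "ff (e 1, y) = 1 - hr (y 0)" by (simp add: ff_def e_app)
lemma hr_e[simp]: "hr (e t 0) = hr t" by (simp add: e_app)

lemma ff_bounds: "x \<in> XX \<Longrightarrow> 0 \<le> ff (x, y) \<and> ff (x, y) \<le> 1"
  unfolding XX_def using hr_bounds[of "y 0"] by auto

lemma avg_eq: "avg (\<lambda>x. x) SS ff k (x, y) = (\<Sum>j<k. ff (x, (SS ^^ j) y)) / real k"
  unfolding avg_def by (simp add: UUpow)

lemma avg_bounds: "x \<in> XX \<Longrightarrow> 0 \<le> avg (\<lambda>x. x) SS ff k (x, y) \<and> avg (\<lambda>x. x) SS ff k (x, y) \<le> 1"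
proof -
  assume x: "x \<in> XX"
  have s0: "0 \<le> (\<Sum>j<k. ff (x, (SS ^^ j) y))" using ff_bounds[OF x] by (intro sum_nonneg) auto
  have s1: "(\<Sum>j<k. ff (x, (SS ^^ j) y)) \<le> (\<Sum>j<k. 1)" using ff_bounds[OF x] by (intro sum_mono) auto
  show ?thesis unfolding avg_eq using s0 s1
    by (cases "k = 0") (auto simp: divide_simps)
qed

lemma savg_eq: "x \<in> XX \<Longrightarrow> y \<in> YY \<Longrightarrow> savg XX (\<lambda>x. x) YY SS ff k (x, y) =
   (\<Sum>j\<in>{- int k..int k}. ff (x, iter_int YY SS j y)) / real (2 * k + 1)"
  unfolding savg_def by (simp add: iterUU)

lemma savg_bounds: "x \<in> XX \<Longrightarrow> y \<in> YY \<Longrightarrow> 0 \<le> savg XX (\<lambda>x. x) YY SS ff k (x, y) \<and> savg XX (\<lambda>x. x) YY SS ff k (x, y) \<le> 1"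
proof -
  assume x: "x \<in> XX" and y: "y \<in> YY"
  have s0: "0 \<le> (\<Sum>j\<in>{- int k..int k}. ff (x, iter_int YY SS j y))" using ff_bounds[OF x] by (intro sum_nonneg) auto
  have s1: "(\<Sum>j\<in>{- int k..int k}. ff (x, iter_int YY SS j y)) \<le> (\<Sum>j\<in>{- int k..int k}. 1)"
    using ff_bounds[OF x] by (intro sum_mono) auto
  have c: "(\<Sum>j\<in>{- int k..int k}. (1::real)) = real (2 * k + 1)" by simp
  show ?thesis unfolding savg_eq[OF x y] using s0 s1 c by (auto simp: divide_simps)
qed

lemma avg_a_tt: "avg (\<lambda>x. x) SS ff k (e 0, e (tt n)) = (\<Sum>j<k. if n + int j < 0 then 1 else 0) / real k"
  unfolding avg_eq by (simp add: SSpow_tt hr_tt)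

lemma avg_a_tt_lim: "(\<lambda>k. avg (\<lambda>x. x) SS ff k (e 0, e (tt n))) \<longlonglongrightarrow> 0"
proof (rule tendsto_sandwich)
  let ?C = "real (nat (-n))"
  show "\<forall>\<^sub>F k in sequentially. 0 \<le> avg (\<lambda>x. x) SS ff k (e 0, e (tt n))"
    using avg_bounds[of "e 0"] by auto
  have "avg (\<lambda>x. x) SS ff k (e 0, e (tt n)) \<le> ?C / real k" for k
  proof -
    have "(\<Sum>j<k. if n + int j < 0 then 1 else 0) = real (card ({..<k} \<inter> {j. n + int j < 0}))"
      by (simp add: sum.If_cases)
    also have "card ({..<k} \<inter> {j. n + int j < 0}) \<le> card {..<nat (-n)}"
      by (rule card_mono) auto
    finally have "(\<Sum>j<k. if n + int j < 0 then 1 else (0::real)) \<le> ?C" by simp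
    then show ?thesis unfolding avg_a_tt by (simp add: divide_right_mono)
  qed
  then show "\<forall>\<^sub>F k in sequentially. avg (\<lambda>x. x) SS ff k (e 0, e (tt n)) \<le> ?C / real k" by auto
  show "(\<lambda>k. 0) \<longlonglongrightarrow> 0" by simp
  show "(\<lambda>k. ?C / real k) \<longlonglongrightarrow> 0" by real_asymp
qed

lemma avg_a_1: "avg (\<lambda>x. x) SS ff k (e 0, e 1) = 0"
  unfolding avg_eq by (simp add: SSpow_fix hr_def e_app)

lemma avg_b_m1: "avg (\<lambda>x. x) SS ff k (e 1, e (-1)) = 0"
  unfolding avg_eq by (simp add: SSpow_fix hr_def e_app)

lemma zero_point: "y \<in> YY \<Longrightarrow> \<exists>x\<in>XX. (\<lambda>k. avg (\<lambda>x. x) SS ff k (x, y)) \<longlonglongrightarrow> 0"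
proof -
  assume "y \<in> YY"
  then consider n where "y = e (tt n)" | "y = e 1" | "y = e (-1)" using YY_cases by blast
  then show ?thesis
  proof cases
    case 1 then show ?thesis using avg_a_tt_lim[of n] in_XX(1) by blast
  next
    case 2 then show ?thesis using avg_a_1 in_XX(1) by (intro bexI[of _ "e 0"]) auto
  next
    case 3 then show ?thesis using avg_b_m1 in_XX(2) by (intro bexI[of _ "e 1"]) auto
  qed
qed



lemma const_image_Sup: "A \<noteq> {} \<Longrightarrow> (\<And>a. a \<in> A \<Longrightarrow> g a = (c::real)) \<Longrightarrow> Sup (g ` A) = c"
proof -
  assume "A \<noteq> {}" "\<And>a. a \<in> A \<Longrightarrow> g a = c"
  then have "g ` A = {c}" by auto
  then show ?thesis by simp
qed

lemma beta_0: "beta XX (\<lambda>x. x) YY SS ff = 0"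
proof -
  let ?R = "Rset XX (\<lambda>x. x) YY SS ff"
  let ?A = "\<lambda>z k. avg (\<lambda>x. x) SS ff k z"
  have inf: "Inf ((\<lambda>z. lim (?A z)) ` {z \<in> ?R. snd z = y}) = 0" if y: "y \<in> YY" for y
  proof (rule cInf_eq_minimum)
    obtain x where x: "x \<in> XX" "?A (x, y) \<longlonglongrightarrow> 0" using zero_point[OF y] by blast
    then have mem: "(x, y) \<in> {z \<in> ?R. snd z = y}" unfolding Rset_def using y by (auto intro: convergentI)
    have l0: "lim (?A (x, y)) = 0" using x(2) by (rule limI)
    show "0 \<in> (\<lambda>z. lim (?A z)) ` {z \<in> ?R. snd z = y}" by (rule image_eqI[where f="\<lambda>z. lim (?A z)", OF sym[OF l0] mem])
  next
    fix v assume "v \<in> (\<lambda>z. lim (?A z)) ` {z \<in> ?R. snd z = y}"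
    then obtain z where z: "z \<in> ?R" "v = lim (?A z)" by blast
    obtain x y' where xy: "z = (x, y')" by (cases z)
    have z1: "(x, y') \<in> XX \<times> YY" "convergent (?A (x, y'))" using z(1) unfolding Rset_def xy by auto
    have "?A (x, y') \<longlonglongrightarrow> v" using z1(2) z(2) xy by (simp add: convergent_LIMSEQ_iff)
    moreover have "\<And>k. 0 \<le> ?A (x, y') k" using avg_bounds z1(1) by blast
    ultimately show "0 \<le> v" by (intro LIMSEQ_le_const[of _ v 0]) auto
  qed
  have "(e 0, e 1) \<in> ?R" unfolding Rset_def by (simp add: avg_a_1 convergent_const)
  then have ne: "snd ` ?R \<noteq> {}" by blast
  have sub: "snd ` ?R \<subseteq> YY" unfolding Rset_def by force
  show ?thesis unfolding beta_def
  proof (rule const_image_Sup[OF ne])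
    fix a assume "a \<in> snd ` ?R"
    then have "a \<in> YY" using sub by blast
    then show "Inf ((\<lambda>z. lim (?A z)) ` {z \<in> ?R. snd z = a}) = 0" by (rule inf)
  qed
qed


lemma gamma_0: "gamma XX (\<lambda>x. x) YY SS ff = 0"
proof -
  let ?A = "\<lambda>z k. avg (\<lambda>x. x) SS ff k z"
  have inf: "Inf ((\<lambda>z. limsup_r (?A z)) ` {z \<in> XX \<times> YY. snd z = y}) = 0" if y: "y \<in> YY" for y
  proof (rule cInf_eq_minimum)
    obtain x where x: "x \<in> XX" "?A (x, y) \<longlonglongrightarrow> 0" using zero_point[OF y] by blast
    then have mem: "(x, y) \<in> {z \<in> XX \<times> YY. snd z = y}" using y by simp
    have l0: "limsup_r (?A (x, y)) = 0" using x(2) by (rule limsup_r_tendsto)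
    show "0 \<in> (\<lambda>z. limsup_r (?A z)) ` {z \<in> XX \<times> YY. snd z = y}"
      by (rule image_eqI[where f="\<lambda>z. limsup_r (?A z)", OF sym[OF l0] mem])
  next
    fix v assume "v \<in> (\<lambda>z. limsup_r (?A z)) ` {z \<in> XX \<times> YY. snd z = y}"
    then obtain z where z: "z \<in> XX \<times> YY" "v = limsup_r (?A z)" by blast
    obtain x y' where xy: "z = (x, y')" by (cases z)
    have x: "x \<in> XX" using z(1) xy by simp
    show "0 \<le> v" unfolding z(2) xy
      by (rule limsup_r_nonneg) (use avg_bounds[OF x] in blast)+
  qed
  have ne: "YY \<noteq> {}" using in_YY by blast
  show ?thesis unfolding gamma_def
  proof (rule const_image_Sup[OF ne])
    fix a assume "a \<in> YY"
    then show "Inf ((\<lambda>z. limsup_r (?A z)) ` {z \<in> XX \<times> YY. snd z = a}) = 0" by (rule inf)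
  qed
qed

lemma Inf_pair: "Inf {a, b::real} = min a b"
  by (simp add: cInf_insert inf_min)

lemma fiber: "y \<in> YY \<Longrightarrow> {z \<in> XX \<times> YY. snd z = y} = {(e 0, y), (e 1, y)}"
  unfolding XX_def by auto

lemma Inf_fiber:
  fixes F :: "pt \<times> pt \<Rightarrow> real"
  assumes y: "y \<in> YY"
  shows "Inf ((\<lambda>z. F z) ` {z \<in> XX \<times> YY. snd z = y}) = min (F (e 0, y)) (F (e 1, y))"
proof -
  have "(\<lambda>z. F z) ` {z \<in> XX \<times> YY. snd z = y} = {F (e 0, y), F (e 1, y)}"
    unfolding fiber[OF y] by simp
  then show ?thesis using Inf_pair[of "F (e 0, y)" "F (e 1, y)"] by simp
qed

lemma avg_sum: "avg (\<lambda>x. x) SS ff k (e 0, y) + avg (\<lambda>x. x) SS ff k (e 1, y) = (if k = 0 then 0 else 1)"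
proof -
  have "(\<Sum>j<k. ff (e 0, (SS ^^ j) y)) + (\<Sum>j<k. ff (e 1, (SS ^^ j) y)) = (\<Sum>j<k. (1::real))"
    unfolding sum.distrib[symmetric] by simp
  then show ?thesis unfolding avg_eq by (simp add: add_divide_distrib[symmetric])
qed

lemma avg_min_le: "min (avg (\<lambda>x. x) SS ff k (e 0, y)) (avg (\<lambda>x. x) SS ff k (e 1, y)) \<le> 1/2"
  using avg_sum[of k y] by (cases "k = 0") auto

lemma count_half: "(\<Sum>j<2*M. if - int M + int j < 0 then 1 else (0::real)) = real M"
proof -
  have "(\<Sum>j<2*M. if - int M + int j < 0 then 1 else (0::real)) = real (card ({..<2*M} \<inter> {j. - int M + int j < 0}))"
    by (simp add: sum.If_cases)
  also have "{..<2*M} \<inter> {j. - int M + int j < 0} = {..<M}" by auto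
  finally show ?thesis by simp
qed

lemma delta_half: "delta XX (\<lambda>x. x) YY SS ff = 1/2"
  unfolding delta_def
proof (rule limsup_r_squeeze[where r="\<lambda>k. 2*k+2" and l="\<lambda>k. 1/2"])
  let ?D = "\<lambda>k. Sup ((\<lambda>y. Inf ((\<lambda>z. avg (\<lambda>x. x) SS ff k z) ` {z \<in> XX \<times> YY. snd z = y})) ` YY)"
  have ne: "YY \<noteq> {}" using in_YY by blast
  have up: "Inf ((\<lambda>z. avg (\<lambda>x. x) SS ff k z) ` {z \<in> XX \<times> YY. snd z = y}) \<le> 1/2" if y: "y \<in> YY" for k y
    using Inf_fiber[OF y, of "\<lambda>z. avg (\<lambda>x. x) SS ff k z"] avg_min_le[of k y] by simp
  show "?D k \<le> 1/2" for k
  proof (rule cSup_least)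
    show "(\<lambda>y. Inf ((\<lambda>z. avg (\<lambda>x. x) SS ff k z) ` {z \<in> XX \<times> YY. snd z = y})) ` YY \<noteq> {}" using ne by blast
    fix v assume "v \<in> (\<lambda>y. Inf ((\<lambda>z. avg (\<lambda>x. x) SS ff k z) ` {z \<in> XX \<times> YY. snd z = y})) ` YY"
    then obtain y where "y \<in> YY" "v = Inf ((\<lambda>z. avg (\<lambda>x. x) SS ff k z) ` {z \<in> XX \<times> YY. snd z = y})" by blast
    then show "v \<le> 1/2" using up by blast
  qed
  show "strict_mono (\<lambda>k::nat. 2*k+2)" by (auto simp: strict_mono_def)
  show "(\<lambda>k. 1/2) \<longlonglongrightarrow> (1/2::real)" by simp
  show "1/2 \<le> ?D (2*k+2)" for k
  proof -
    let ?y = "e (tt (- int (k+1)))"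
    have kk: "2*k+2 = 2*(k+1)" by simp
    have a0: "avg (\<lambda>x. x) SS ff (2*k+2) (e 0, ?y) = 1/2"
      unfolding avg_a_tt kk using count_half[of "k+1"] by simp
    have a1: "avg (\<lambda>x. x) SS ff (2*k+2) (e 1, ?y) = 1/2"
      using avg_sum[of "2*k+2" ?y] a0 by simp
    have v: "Inf ((\<lambda>z. avg (\<lambda>x. x) SS ff (2*k+2) z) ` {z \<in> XX \<times> YY. snd z = ?y}) = 1/2"
      using Inf_fiber[OF in_YY(1)[of "- int (k+1)"], of "\<lambda>z. avg (\<lambda>x. x) SS ff (2*k+2) z"] a0 a1
      by simp
    have bdd: "bdd_above ((\<lambda>y. Inf ((\<lambda>z. avg (\<lambda>x. x) SS ff (2*k+2) z) ` {z \<in> XX \<times> YY. snd z = y})) ` YY)"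
      by (rule bdd_aboveI2[where M="1/2"]) (rule up)
    have le: "Inf ((\<lambda>z. avg (\<lambda>x. x) SS ff (2*k+2) z) ` {z \<in> XX \<times> YY. snd z = ?y}) \<le> ?D (2*k+2)"
      by (rule cSup_upper[OF imageI[OF in_YY(1)] bdd])
    show ?thesis using le unfolding v .
  qed
qed


abbreviation sA where "sA z k \<equiv> savg XX (\<lambda>x. x) YY SS ff k z"

lemma savg_sum: "y \<in> YY \<Longrightarrow> sA (e 0, y) k + sA (e 1, y) k = 1"
proof -
  assume y: "y \<in> YY"
  have "(\<Sum>j\<in>{- int k..int k}. ff (e 0, iter_int YY SS j y)) + (\<Sum>j\<in>{- int k..int k}. ff (e 1, iter_int YY SS j y))
     = (\<Sum>j\<in>{- int k..int k}. (1::real))"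
    unfolding sum.distrib[symmetric] by simp
  also have "\<dots> = real (2 * k + 1)" by simp
  finally show ?thesis unfolding savg_eq[OF in_XX(1) y] savg_eq[OF in_XX(2) y]
    by (simp add: add_divide_distrib[symmetric])
qed

lemma savg_a_tt: "sA (e 0, e (tt n)) k = (\<Sum>j\<in>{- int k..int k}. if n + j < 0 then 1 else 0) / real (2 * k + 1)"
  unfolding savg_eq[OF in_XX(1) in_YY(1)] by (simp add: iter_tt hr_tt)

lemma count_s: "\<bar>n\<bar> \<le> int k \<Longrightarrow> (\<Sum>j\<in>{- int k..int k}. if n + j < 0 then 1 else (0::real)) = real k - real_of_int n"
proof -
  assume h: "\<bar>n\<bar> \<le> int k"
  have "(\<Sum>j\<in>{- int k..int k}. if n + j < 0 then 1 else (0::real)) = real (card ({- int k..int k} \<inter> {j. n + j < 0}))"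
    by (simp add: sum.If_cases)
  also have "{- int k..int k} \<inter> {j. n + j < 0} = {- int k.. - n - 1}" using h by auto
  also have "card {- int k.. - n - 1} = nat (int k - n)" by simp
  also have "real (nat (int k - n)) = real k - real_of_int n" using h by simp
  finally show ?thesis .
qed

lemma savg_a_lim: "(\<lambda>k. sA (e 0, e (tt n)) k) \<longlonglongrightarrow> 1/2"
proof -
  have ev: "\<forall>\<^sub>F k in sequentially. (real k - real_of_int n) / (2 * real k + 1) = sA (e 0, e (tt n)) k"
    using eventually_ge_at_top[of "nat \<bar>n\<bar>"]
    by eventually_elim (simp add: savg_a_tt count_s)
  have "(\<lambda>k. (real k - real_of_int n) / (2 * real k + 1)) \<longlonglongrightarrow> 1/2" by real_asymp
  then show ?thesis using ev by (rule Lim_transform_eventually)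
qed

lemma savg_b_lim: "(\<lambda>k. sA (e 1, e (tt n)) k) \<longlonglongrightarrow> 1/2"
proof -
  have "(\<lambda>k. 1 - sA (e 0, e (tt n)) k) \<longlonglongrightarrow> 1 - 1/2" by (intro tendsto_intros savg_a_lim)
  moreover have "sA (e 1, e (tt n)) k = 1 - sA (e 0, e (tt n)) k" for k
    using savg_sum[OF in_YY(1)[of n], of k] by simp
  ultimately show ?thesis by simp
qed

lemma savg_fix: "x \<in> XX \<Longrightarrow> sA (x, e 1) k = ff (x, e 1)" "x \<in> XX \<Longrightarrow> sA (x, e (-1)) k = ff (x, e (-1))"
  by (simp_all add: savg_eq iter_fix field_simps)

definition hv :: "pt \<Rightarrow> real" where "hv y = (if y \<in> range (\<lambda>n. e (tt n)) then 1/2 else 0)"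

lemma not_fix: "e 1 \<notin> range (\<lambda>n. e (tt n))" "e (-1) \<notin> range (\<lambda>n. e (tt n))"
  using tt_bounds by (auto simp del: e_inj) (metis e_inj less_irrefl)+

lemma spair: "y \<in> YY \<Longrightarrow> \<exists>c0 c1. (\<lambda>k. sA (e 0, y) k) \<longlonglongrightarrow> c0 \<and> (\<lambda>k. sA (e 1, y) k) \<longlonglongrightarrow> c1 \<and> min c0 c1 = hv y"
proof -
  assume "y \<in> YY"
  then consider n where "y = e (tt n)" | "y = e 1" | "y = e (-1)" using YY_cases by blast
  then show ?thesis
  proof cases
    case 1 then show ?thesis using savg_a_lim[of n] savg_b_lim[of n]
      by (intro exI[of _ "1/2"]) (auto simp: hv_def)
  next
    case 2 then show ?thesis using savg_fix(1) not_fix(1)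
      by (intro exI[of _ 0] exI[of _ 1]) (auto simp: hv_def e_app hr_def)
  next
    case 3 then show ?thesis using savg_fix(2) not_fix(2)
      by (intro exI[of _ 1] exI[of _ 0]) (auto simp: hv_def e_app hr_def)
  qed
qed


lemma Sup_hv: "(\<And>y. y \<in> YY \<Longrightarrow> g y = hv y) \<Longrightarrow> Sup (g ` YY) = 1/2"
proof -
  assume h: "\<And>y. y \<in> YY \<Longrightarrow> g y = hv y"
  have "g ` YY = hv ` YY" using h by (rule image_cong[OF refl])
  moreover have "Sup (hv ` YY) = 1/2"
  proof (rule cSup_eq_maximum)
    have "hv (e (tt 0)) = 1/2" unfolding hv_def by auto
    then show "1/2 \<in> hv ` YY" by (metis in_YY(1) imageI)
    fix v assume "v \<in> hv ` YY" then show "v \<le> 1/2" unfolding hv_def by auto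
  qed
  ultimately show ?thesis by simp
qed

lemma gamma_s_half: "gamma_s XX (\<lambda>x. x) YY SS ff = 1/2"
  unfolding gamma_s_def
proof (rule Sup_hv)
  fix y assume y: "y \<in> YY"
  obtain c0 c1 where c: "(\<lambda>k. sA (e 0, y) k) \<longlonglongrightarrow> c0" "(\<lambda>k. sA (e 1, y) k) \<longlonglongrightarrow> c1" "min c0 c1 = hv y"
    using spair[OF y] by blast
  show "Inf ((\<lambda>z. limsup_r (\<lambda>k. sA z k)) ` {z \<in> XX \<times> YY. snd z = y}) = hv y"
    unfolding Inf_fiber[OF y] using limsup_r_tendsto[OF c(1)] limsup_r_tendsto[OF c(2)] c(3) by simp
qed

lemma Rset_s_all: "Rset_s XX (\<lambda>x. x) YY SS ff = XX \<times> YY"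
proof
  show "Rset_s XX (\<lambda>x. x) YY SS ff \<subseteq> XX \<times> YY" unfolding Rset_s_def by auto
  show "XX \<times> YY \<subseteq> Rset_s XX (\<lambda>x. x) YY SS ff"
  proof
    fix z assume z: "z \<in> XX \<times> YY"
    obtain x y where xy: "z = (x, y)" by (cases z)
    have y: "y \<in> YY" and x: "x = e 0 \<or> x = e 1" using z xy unfolding XX_def by auto
    obtain c0 c1 where c: "(\<lambda>k. sA (e 0, y) k) \<longlonglongrightarrow> c0" "(\<lambda>k. sA (e 1, y) k) \<longlonglongrightarrow> c1"
      using spair[OF y] by blast
    have "convergent (\<lambda>k. sA (x, y) k)" using x c by (auto intro: convergentI)
    then show "z \<in> Rset_s XX (\<lambda>x. x) YY SS ff" unfolding Rset_s_def using z xy by simp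
  qed
qed

lemma beta_s_half: "beta_s XX (\<lambda>x. x) YY SS ff = 1/2"
proof -
  have "XX \<noteq> {}" using in_XX(1) by blast
  then have sn: "snd ` (XX \<times> YY) = YY" by (simp add: snd_image_times)
  show ?thesis unfolding beta_s_def Rset_s_all sn
  proof (rule Sup_hv)
    fix y assume y: "y \<in> YY"
    obtain c0 c1 where c: "(\<lambda>k. sA (e 0, y) k) \<longlonglongrightarrow> c0" "(\<lambda>k. sA (e 1, y) k) \<longlonglongrightarrow> c1" "min c0 c1 = hv y"
      using spair[OF y] by blast
    show "Inf ((\<lambda>z. lim (\<lambda>k. sA z k)) ` {z \<in> XX \<times> YY. snd z = y}) = hv y"
      unfolding Inf_fiber[OF y] using limI[OF c(1)] limI[OF c(2)] c(3) by simp
  qed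
qed

lemma delta_s_half: "delta_s XX (\<lambda>x. x) YY SS ff = 1/2"
  unfolding delta_s_def
proof (rule limsup_r_squeeze[where r="\<lambda>k. k" and l="\<lambda>k. real k / (2 * real k + 1)"])
  let ?D = "\<lambda>k. Sup ((\<lambda>y. Inf ((\<lambda>z. sA z k) ` {z \<in> XX \<times> YY. snd z = y})) ` YY)"
  have ne: "YY \<noteq> {}" using in_YY by blast
  have up: "Inf ((\<lambda>z. sA z k) ` {z \<in> XX \<times> YY. snd z = y}) \<le> 1/2" if y: "y \<in> YY" for k y
    using Inf_fiber[OF y, of "\<lambda>z. sA z k"] savg_sum[OF y, of k] by simp
  show "?D k \<le> 1/2" for k
  proof (rule cSup_least)
    show "(\<lambda>y. Inf ((\<lambda>z. sA z k) ` {z \<in> XX \<times> YY. snd z = y})) ` YY \<noteq> {}" using ne by blast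
    fix v assume "v \<in> (\<lambda>y. Inf ((\<lambda>z. sA z k) ` {z \<in> XX \<times> YY. snd z = y})) ` YY"
    then obtain y where "y \<in> YY" "v = Inf ((\<lambda>z. sA z k) ` {z \<in> XX \<times> YY. snd z = y})" by blast
    then show "v \<le> 1/2" using up by blast
  qed
  show "strict_mono (\<lambda>k::nat. k)" by (auto simp: strict_mono_def)
  show "(\<lambda>k. real k / (2 * real k + 1)) \<longlonglongrightarrow> 1/2" by real_asymp
  show "real k / (2 * real k + 1) \<le> ?D k" for k
  proof -
    let ?y = "e (tt 0)"
    have a0: "sA (e 0, ?y) k = real k / (2 * real k + 1)"
      unfolding savg_a_tt using count_s[of 0 k] by simp
    have a1: "sA (e 1, ?y) k = 1 - real k / (2 * real k + 1)"
      using savg_sum[OF in_YY(1)[of 0], of k] a0 by simp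
    have h: "real k / (2 * real k + 1) \<le> 1 - real k / (2 * real k + 1)"
      by (simp add: field_simps)
    have v: "real k / (2 * real k + 1) \<le> Inf ((\<lambda>z. sA z k) ` {z \<in> XX \<times> YY. snd z = ?y})"
      using Inf_fiber[OF in_YY(1)[of 0], of "\<lambda>z. sA z k"] a0 a1 h by simp
    have bdd: "bdd_above ((\<lambda>y. Inf ((\<lambda>z. sA z k) ` {z \<in> XX \<times> YY. snd z = y})) ` YY)"
      by (rule bdd_aboveI2[where M="1/2"]) (rule up)
    have le: "Inf ((\<lambda>z. sA z k) ` {z \<in> XX \<times> YY. snd z = ?y}) \<le> ?D k"
      by (rule cSup_upper[OF imageI[OF in_YY(1)] bdd])
    show ?thesis using v le by (rule order_trans)
  qed
qed


lemma meas_cont: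
  assumes "continuous_on A f" "f ` A \<subseteq> B"
  shows "f \<in> measurable (restrict_space borel A) (restrict_space borel B)"
proof (rule measurable_restrict_space2)
  show "f \<in> space (restrict_space borel A) \<rightarrow> B" using assms(2) by (auto simp: space_restrict_space)
  show "f \<in> borel_measurable (restrict_space borel A)" by (rule borel_measurable_continuous_on_restrict[OF assms(1)])
qed

lemma cont_SS: "continuous_on YY SS"
  unfolding SS_def sg_def
  by (intro continuous_intros) (use YY_0 in fastforce)

lemma UU_eq: "UU = (\<lambda>z. (fst z, SS (snd z)))"
  by (auto simp: prodmap_def fun_eq_iff)

lemma cont_UU: "continuous_on (XX \<times> YY) UU"
  unfolding UU_eq
  by (intro continuous_intros continuous_on_compose2[OF cont_SS]) auto

lemma UU_img: "UU ` (XX \<times> YY) \<subseteq> XX \<times> YY"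
  using SS_YY by auto

definition ph :: "pt \<Rightarrow> pt \<times> pt" where "ph y = (e (hr (y 0)), y)"

lemma cont_ph: "continuous_on A ph"
  unfolding ph_def by (intro continuous_intros)

lemma hr_YY: "y \<in> YY \<Longrightarrow> hr (y 0) = 0 \<or> hr (y 0) = 1"
proof -
  assume "y \<in> YY"
  then consider n where "y = e (tt n)" | "y = e 1" | "y = e (-1)" using YY_cases by blast
  then show ?thesis
  proof cases
    case 1 then show ?thesis by (simp add: e_app hr_tt)
  qed (simp_all add: e_app hr_def)
qed

lemma ph_img: "ph ` YY \<subseteq> XX \<times> YY"
  using hr_YY unfolding ph_def XX_def by force

lemma ff_ph: "y \<in> YY \<Longrightarrow> ff (ph y) = 0"
  using hr_YY[of y] unfolding ph_def ff_def by (auto simp: e_app)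

lemma space_rsb: "space (restrict_space borel A) = A"
  by (simp add: space_restrict_space)

lemma sing_sets: "y \<in> A \<Longrightarrow> {y} \<in> sets (restrict_space borel (A :: pt set))"
proof -
  assume y: "y \<in> A"
  have "{y} \<in> sets borel" by (rule borel_closed) (rule closed_singleton)
  moreover have "{y} = A \<inter> {y}" using y by auto
  ultimately show ?thesis unfolding sets_restrict_space by blast
qed

lemma shift_const:
  fixes g :: "int \<Rightarrow> real"
  shows "(\<And>n. g (n + 1) = g n) \<Longrightarrow> g n = g 0"
proof -
  assume h: "\<And>n. g (n + 1) = g n"
  have p: "g (int m) = g 0" for m
  proof (induction m)
    case (Suc m)
    have ee: "int (Suc m) = int m + 1" by simp
    show ?case unfolding ee h using Suc .
  qed simp
  have q: "g (- int m) = g 0" for m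
  proof (induction m)
    case (Suc m)
    have "g (- int (Suc m)) = g (- int (Suc m) + 1)" by (rule h[symmetric])
    also have "- int (Suc m) + 1 = - int m" by simp
    finally show ?case using Suc by simp
  qed simp
  show ?thesis
  proof (cases "n \<ge> 0")
    case True then show ?thesis using p[of "nat n"] by simp
  next
    case False then show ?thesis using q[of "nat (-n)"] by simp
  qed
qed

lemma inv_AE:
  assumes nu: "\<nu> \<in> inv_meas YY SS"
  shows "AE y in \<nu>. y = e 1 \<or> y = e (-1)"
proof -
  have sets: "sets \<nu> = sets (restrict_space borel YY)" and P: "prob_space \<nu>"
    and mS: "SS \<in> measurable \<nu> \<nu>" and inv: "distr \<nu> \<nu> SS = \<nu>"
    using nu unfolding inv_meas_def by auto
  interpret prob_space \<nu> by (rule P)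
  have sp: "space \<nu> = YY" using sets_eq_imp_space_eq[OF sets] by (simp add: space_rsb)
  have sing: "{e (tt n)} \<in> sets \<nu>" for n unfolding sets by (rule sing_sets) simp
  have step: "measure \<nu> {e (tt (n + 1))} = measure \<nu> {e (tt n)}" for n
  proof -
    have pre: "SS -` {e (tt (n + 1))} \<inter> space \<nu> = {e (tt n)}"
    proof
      show "{e (tt n)} \<subseteq> SS -` {e (tt (n + 1))} \<inter> space \<nu>" using sp by (auto simp: tt_succ)
      show "SS -` {e (tt (n + 1))} \<inter> space \<nu> \<subseteq> {e (tt n)}"
      proof
        fix y assume "y \<in> SS -` {e (tt (n + 1))} \<inter> space \<nu>"
        then have y: "y \<in> YY" "SS y = SS (e (tt n))" using sp by (auto simp: tt_succ)
        then have "y = e (tt n)" using inj_onD[OF inj_SS y(2) y(1) in_YY(1)] by simp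
        then show "y \<in> {e (tt n)}" by simp
      qed
    qed
    have "measure \<nu> {e (tt (n + 1))} = measure (distr \<nu> \<nu> SS) {e (tt (n + 1))}" using inv by simp
    also have "\<dots> = measure \<nu> (SS -` {e (tt (n + 1))} \<inter> space \<nu>)" by (rule measure_distr[OF mS sing])
    finally show ?thesis unfolding pre .
  qed
  have const: "measure \<nu> {e (tt n)} = measure \<nu> {e (tt 0)}" for n
    by (rule shift_const[of "\<lambda>n. measure \<nu> {e (tt n)}"]) (rule step)
  let ?c = "measure \<nu> {e (tt 0)}"
  have c0: "?c = 0"
  proof (rule ccontr)
    assume "?c \<noteq> 0"
    then have cpos: "?c > 0" using measure_nonneg[of \<nu> "{e (tt 0)}"] by linarith
    obtain N :: nat where N: "1 < real N * ?c" using ex_less_of_nat_mult[OF cpos, of 1] by blast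
    let ?E = "(\<lambda>m. e (tt (int m))) ` {..<N}"
    have inj: "inj_on (\<lambda>m. e (tt (int m))) {..<N}"
    proof (rule inj_onI)
      fix x y assume "x \<in> {..<N}" "y \<in> {..<N}" "e (tt (int x)) = e (tt (int y))"
      then show "x = y" using tt_inj[of "int x" "int y"] by simp
    qed
    have "measure \<nu> ?E = (\<Sum>x\<in>?E. measure \<nu> {x})"
      by (rule finite_measure_eq_sum_singleton) (use sing in auto)
    also have "\<dots> = (\<Sum>m<N. measure \<nu> {e (tt (int m))})" by (rule sum.reindex[OF inj, unfolded comp_def])
    also have "\<dots> = (\<Sum>m<N. ?c)" by (rule sum.cong[OF refl]) (rule const)
    also have "\<dots> = real N * ?c" by simp
    finally have "measure \<nu> ?E = real N * ?c" .
    moreover have "measure \<nu> ?E \<le> 1" by (rule prob_le_1)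
    ultimately show False using N by simp
  qed
  have null: "emeasure \<nu> {x} = 0" if xr: "x \<in> range (\<lambda>n. e (tt n))" for x
  proof -
    obtain n where x: "x = e (tt n)" using xr by blast
    show ?thesis unfolding x emeasure_eq_measure using const[of n] c0 by simp
  qed
  have ae1: "AE y in \<nu>. y \<notin> range (\<lambda>n. e (tt n))"
    by (rule AE_discrete_difference) (use null sing in auto)
  show ?thesis using ae1 AE_space
  proof eventually_elim
    case (elim y)
    then show ?case using YY_cases[of y] sp by auto
  qed
qed


lemma lift:
  assumes nu: "\<nu> \<in> inv_meas YY SS"
  defines "lam \<equiv> distr \<nu> (restrict_space borel (XX \<times> YY)) ph"
  shows "lam \<in> inv_meas (XX \<times> YY) UU" "distr lam (restrict_space borel YY) snd = \<nu>"
    "integral\<^sup>L lam ff = 0"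
proof -
  have sets: "sets \<nu> = sets (restrict_space borel YY)" and P: "prob_space \<nu>"
    and mS: "SS \<in> measurable \<nu> \<nu>" and inv: "distr \<nu> \<nu> SS = \<nu>"
    using nu unfolding inv_meas_def by auto
  have sp: "space \<nu> = YY" using sets_eq_imp_space_eq[OF sets] by (simp add: space_rsb)
  let ?Z = "restrict_space borel (XX \<times> YY)"
  have "measurable \<nu> ?Z = measurable (restrict_space borel YY) ?Z" by (rule measurable_cong_sets[OF sets refl])
  then have mph: "ph \<in> measurable \<nu> ?Z"
    using meas_cont[OF cont_ph ph_img] by simp
  have mU: "UU \<in> measurable ?Z ?Z" by (rule meas_cont[OF cont_UU UU_img])
  have mSn: "snd \<in> measurable ?Z (restrict_space borel YY)"
    by (rule meas_cont) (auto intro: continuous_on_snd continuous_on_id)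
  have mff: "ff \<in> borel_measurable ?Z" by (rule borel_measurable_continuous_on_restrict[OF cont_ff])
  have slam: "sets lam = sets ?Z" unfolding lam_def by simp
  have "prob_space lam" unfolding lam_def by (rule prob_space.prob_space_distr[OF P mph])
  moreover have "UU \<in> measurable lam lam" using mU measurable_cong_sets[OF slam slam] by simp
  moreover have "distr lam lam UU = lam"
  proof -
    have "distr lam lam UU = distr lam ?Z UU" by (rule distr_cong[OF refl slam]) simp
    also have "\<dots> = distr \<nu> ?Z (UU \<circ> ph)" unfolding lam_def by (rule distr_distr[OF mU mph])
    also have "\<dots> = distr \<nu> ?Z (ph \<circ> SS)"
    proof (rule distr_cong_AE[OF refl refl])
      show "AE x in \<nu>. (UU \<circ> ph) x = (ph \<circ> SS) x"
        using inv_AE[OF nu] by eventually_elim (auto simp: ph_def e_app sg_fix)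
      show "UU \<circ> ph \<in> measurable \<nu> ?Z" by (rule measurable_comp[OF mph mU])
      show "ph \<circ> SS \<in> measurable \<nu> ?Z" by (rule measurable_comp[OF mS mph])
    qed
    also have "\<dots> = distr (distr \<nu> \<nu> SS) ?Z ph" by (rule distr_distr[OF mph mS, symmetric])
    also have "\<dots> = lam" unfolding inv lam_def ..
    finally show ?thesis .
  qed
  ultimately show "lam \<in> inv_meas (XX \<times> YY) UU" unfolding inv_meas_def using slam by simp
  have "distr lam (restrict_space borel YY) snd = distr \<nu> (restrict_space borel YY) (snd \<circ> ph)"
    unfolding lam_def by (rule distr_distr[OF mSn mph])
  also have "\<dots> = distr \<nu> (restrict_space borel YY) (\<lambda>x. x)"
    by (rule distr_cong) (auto simp: ph_def)
  also have "\<dots> = \<nu>" by (rule distr_id2) (simp add: sets)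
  finally show "distr lam (restrict_space borel YY) snd = \<nu>" .
  have "integral\<^sup>L lam ff = integral\<^sup>L \<nu> (\<lambda>y. ff (ph y))" unfolding lam_def by (rule integral_distr[OF mph mff])
  also have "\<dots> = integral\<^sup>L \<nu> (\<lambda>y. 0)" by (rule Bochner_Integration.integral_cong[OF refl]) (use sp ff_ph in auto)
  finally show "integral\<^sup>L lam ff = 0" by simp
qed

lemma psi_0:
  assumes nu: "\<nu> \<in> inv_meas YY SS"
  shows "psi XX (\<lambda>x. x) YY SS ff \<nu> = 0"
  unfolding psi_def
proof (rule cInf_eq_minimum)
  show "0 \<in> {integral\<^sup>L lam ff |lam. lam \<in> inv_meas (XX \<times> YY) UU \<and> distr lam (restrict_space borel YY) snd = \<nu>}"
  proof -
    let ?lam = "distr \<nu> (restrict_space borel (XX \<times> YY)) ph"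
    have "0 = integral\<^sup>L ?lam ff \<and> ?lam \<in> inv_meas (XX \<times> YY) UU \<and> distr ?lam (restrict_space borel YY) snd = \<nu>"
      using lift[OF nu] by simp
    then show ?thesis by blast
  qed
next
  fix v assume "v \<in> {integral\<^sup>L lam ff |lam. lam \<in> inv_meas (XX \<times> YY) UU \<and> distr lam (restrict_space borel YY) snd = \<nu>}"
  then obtain lam where lam: "lam \<in> inv_meas (XX \<times> YY) UU" "v = integral\<^sup>L lam ff" by blast
  have "sets lam = sets (restrict_space borel (XX \<times> YY))" using lam(1) unfolding inv_meas_def by auto
  then have sp: "space lam = XX \<times> YY" using sets_eq_imp_space_eq by (metis space_rsb)
  have "AE z in lam. 0 \<le> ff z"
    using AE_space
  proof eventually_elim
    case (elim z)
    then obtain x y where "z = (x, y)" "x \<in> XX" using sp by auto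
    then show ?case using ff_bounds by simp
  qed
  then show "0 \<le> v" unfolding lam(2) by (rule integral_nonneg_AE)
qed

lemma alpha_0: "alpha XX (\<lambda>x. x) YY SS ff = 0"
  unfolding alpha_def
proof (rule const_image_Sup)
  let ?M = "restrict_space borel YY"
  have sp: "e 1 \<in> space ?M" by (simp add: space_rsb)
  have mS: "SS \<in> measurable ?M ?M" by (rule meas_cont[OF cont_SS]) (use SS_YY in auto)
  have "return ?M (e 1) \<in> inv_meas YY SS"
    unfolding inv_meas_def
  proof (intro CollectI conjI)
    show "sets (return ?M (e 1)) = sets ?M" by simp
    show "prob_space (return ?M (e 1))" by (rule prob_space_return[OF sp])
    show "SS \<in> measurable (return ?M (e 1)) (return ?M (e 1))"
      using mS measurable_cong_sets[of "return ?M (e 1)" ?M "return ?M (e 1)" ?M] by simp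
    have "distr (return ?M (e 1)) (return ?M (e 1)) SS = distr (return ?M (e 1)) ?M SS"
      by (rule distr_cong) auto
    also have "\<dots> = return ?M (SS (e 1))"
      by (rule distr_return) (use mS measurable_cong_sets[of "return ?M (e 1)" ?M ?M ?M] sp in auto)
    also have "SS (e 1) = e 1" by (simp add: sg_fix)
    finally show "distr (return ?M (e 1)) (return ?M (e 1)) SS = return ?M (e 1)" .
  qed
  then show "inv_meas YY SS \<noteq> {}" by blast
  show "\<And>a. a \<in> inv_meas YY SS \<Longrightarrow> psi XX (\<lambda>x. x) YY SS ff a = 0" by (rule psi_0)
qed


theorem proposition1p11:
  shows "\<exists>(X::pt set) (T::pt \<Rightarrow> pt) (Y::pt set) (S::pt \<Rightarrow> pt) (f::pt \<times> pt \<Rightarrow> real).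
    tds X T \<and> tds Y S \<and> continuous_on (X \<times> Y) f \<and>
    alpha X T Y S f = beta X T Y S f \<and> beta X T Y S f = gamma X T Y S f \<and>
    gamma X T Y S f < delta X T Y S f \<and>
    alpha X T Y S f < beta_s X T Y S f \<and> beta_s X T Y S f = gamma_s X T Y S f \<and>
    gamma_s X T Y S f = delta_s X T Y S f \<and> delta_s X T Y S f = delta X T Y S f"
  by (intro exI[of _ XX] exI[of _ "\<lambda>x::pt. x"] exI[of _ YY] exI[of _ SS] exI[of _ ff])
    (simp add: tds_X tds_Y cont_ff alpha_0 beta_0 gamma_0 delta_half beta_s_half gamma_s_half delta_s_half)

end
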